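(* Let $b\ge 2$ and $n\ge 0$ be integers. Then $bt+(b-1)\in T_b(n)$ for every $t\in T_b(n)\setminus\{0\}$.
   Context: For integers $b\ge 2$, $n\ge 0$, $i\ge0$ put $s_i=(b+1)b^{n+i}-1$ and $T_b(n)=\langle\{s_i:i\in\mathbb{N}\}\rangle$, the submonoid of $(\mathbb{N},+)$ generated by the $s_i$. *)

theory Defs
  imports Main
begin

definition s_gen :: "nat \<Rightarrow> nat \<Rightarrow> nat \<Rightarrow> nat" where
  "s_gen b n i = (b + 1) * b ^ (n + i) - 1"

inductive_set submonoid_gen :: "nat set \<Rightarrow> nat set" for A :: "nat set" where
  zero: "0 \<in> submonoid_gen A"
| add_gen: "a \<in> A \<Longrightarrow> x \<in> submonoid_gen A \<Longrightarrow> a + x \<in> submonoid_gen A"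

definition T :: "nat \<Rightarrow> nat \<Rightarrow> nat set" where
  "T b n = submonoid_gen (range (s_gen b n))"

end

theory Submission
  imports Defs
begin

lemma sg_add: "x \<in> submonoid_gen A \<Longrightarrow> y \<in> submonoid_gen A \<Longrightarrow> x + y \<in> submonoid_gen A"
  by (induction x rule: submonoid_gen.induct)
     (auto simp: add.assoc intro: submonoid_gen.intros)

lemma sg_mult: "x \<in> submonoid_gen A \<Longrightarrow> k * x \<in> submonoid_gen A"
  by (induction k) (auto intro: sg_add submonoid_gen.intros)

lemma s_step:
  assumes "b \<ge> 2" shows "b * s_gen b n i + (b - 1) = s_gen b n (Suc i)"
proof -
  define q where "q = (b + 1) * b ^ (n + i)"
  have "b ^ (n + i) > 0" using assms by simp
  then have q1: "q \<ge> 1" unfolding q_def by (metis One_nat_def Suc_leI add_gr_0 mult_pos_pos zero_less_one)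
  have "s_gen b n (Suc i) = b * q - 1" by (simp add: s_gen_def q_def algebra_simps)
  moreover have "s_gen b n i = q - 1" by (simp add: s_gen_def q_def)
  moreover have "b * (q - 1) + (b - 1) = b * q - 1"
    using q1 assms by (simp add: right_diff_distrib') 
  ultimately show ?thesis by simp
qed

theorem mainTheorem5:
  fixes b n t :: nat
  assumes "b \<ge> 2"
    and "t \<in> T b n - {0}"
  shows "b * t + (b - 1) \<in> T b n"
proof -
  have tT: "t \<in> submonoid_gen (range (s_gen b n))" and t0: "t \<noteq> 0"
    using assms(2) by (auto simp: T_def)
  from tT t0 obtain i x where tx: "t = s_gen b n i + x" and x: "x \<in> submonoid_gen (range (s_gen b n))"
    by (cases rule: submonoid_gen.cases) auto
  have "b * t + (b - 1) = s_gen b n (Suc i) + b * x"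
    using s_step[OF assms(1), of n i] tx by (simp add: algebra_simps)
  moreover have "s_gen b n (Suc i) + b * x \<in> submonoid_gen (range (s_gen b n))"
    by (rule submonoid_gen.add_gen) (auto intro: sg_mult x)
  ultimately show ?thesis by (simp add: T_def)
qed

end
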